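(* Let $c\in\mathbb{C}$ and $\alpha,\bar\alpha,\beta,\bar\beta\in\mathbb{C}$ with $\alpha,\bar\alpha\neq0$, $\beta\neq\bar\beta$ and $\beta-\bar\beta+c=0$. Consider $TSV(c)$-module extensions $0\to M_{\bar\alpha,\bar\beta}\to E\to M_{\alpha,\beta}\to0$ written as $E=\mathbb{C}[\partial]v_{\bar\alpha}\oplus\mathbb{C}[\partial]v_\alpha$ with $L_\lambda v_\alpha=(\partial+\alpha\lambda+\beta)v_\alpha+f(\partial,\lambda)v_{\bar\alpha}$, $Y_\lambda v_\alpha=g(\partial,\lambda)v_{\bar\alpha}$, $M_\lambda v_\alpha=h(\partial,\lambda)v_{\bar\alpha}$. Then $h=0$, every such extension is equivalent to one with $f=0$, and an extension with $f=h=0$ is nontrivial iff $g\neq0$. The nonzero $g$ that occur (with $f=h=0$) are exactly the nonzero scalar multiples of the following, under the stated conditions ($m$ = total degree of $g$): (a) $m=0$: $\alpha-\bar\alpha=-\frac12$, $g=1$; (b) $m=1$: $\alpha-\bar\alpha=\frac12$, $g=\partial+2\bar\alpha\lambda-2\bar\alpha c+\bar\beta$; (c) $m=2$: $\alpha=1$, $\bar\alpha=-\frac12$, $g=\partial^2+2(1+2\bar\alpha)\partial\lambda+2\bar\alpha\lambda^2+a_{10}\partial+a_{11}\lambda+a_{00}$ with $a_{10}=2\bar\beta-2(1+2\bar\alpha)c$, $a_{11}=-4c\bar\alpha+2(1+2\bar\alpha)\bar\beta$, $a_{00}=\bar\beta^2-2c\bar\beta(1+2\bar\alpha)+2c^2\bar\alpha$;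 and no other degrees occur.
   Context: A conformal module over a Lie conformal algebra $\mathcal{R}$ is a $\mathbb{C}[\partial]$-module $V$ with $\mathbb{C}$-linear maps $a\otimes v\mapsto a_\lambda v\in V[\lambda]$ such that $(\partial a)_\lambda v=-\lambda a_\lambda v$, $a_\lambda(\partial v)=(\partial+\lambda)a_\lambda v$, and $a_\lambda(b_\mu v)-b_\mu(a_\lambda v)=[a_\lambda b]_{\lambda+\mu}v$. $TSV(c)$ ($c\in\mathbb{C}$) is the free $\mathbb{C}[\partial]$-module on $L,Y,M$ with $[L_\lambda L]=(\partial+2\lambda)L$, $[L_\lambda Y]=(\partial+\frac32\lambda+c)Y$, $[L_\lambda M]=(\partial+2c)M$, $[Y_\lambda Y]=(\partial+2\lambda)(-\partial-2c)M$, $[Y_\lambda M]=[M_\lambda M]=0$. For $\alpha\neq0$, $M_{\alpha,\beta}=\mathbb{C}[\partial]v$ has $L_\lambda v=(\partial+\alpha\lambda+\beta)v$, $Y_\lambda v=M_\lambda v=0$. In $E$, $\mathbb{C}[\partial]v_{\bar\alpha}$ is a submodule isomorphic to $M_{\bar\alpha,\bar\beta}$. Equivalence of extensions means a module homomorphism between middle terms compatible with the identities on the end terms; trivial means equivalent to the direct sum extension. *)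

theory Defs
  imports "HOL-Computational_Algebra.Polynomial"
begin

datatype gen = GL | GY | GM

definition gens :: "gen list" where "gens = [GL, GY, GM]"

(* An element of TSV(c) = C[d]L + C[d]Y + C[d]M : its three coefficient polynomials in d. *)
type_synonym relt = "gen \<Rightarrow> complex poly"

(* An element p(d) vbar + q(d) v of E = C[d]vbar + C[d]v, represented as (p, q). *)
type_synonym melt = "complex poly \<times> complex poly"

(* Two-variable polynomials F(d, lambda): outer variable lambda, coefficients in C[d]. *)
type_synonym poly2 = "complex poly poly"

definition Dv :: poly2 where "Dv = [:[:0, 1:]:]"
definition Lv :: poly2 where "Lv = [:0, 1:]"
definition Cst :: "complex \<Rightarrow> poly2" where "Cst a = [:[:a:]:]"

definition at_lam :: "poly2 \<Rightarrow> complex \<Rightarrow> complex poly" where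
  "at_lam F l = poly F [:l:]"

definition eadd :: "melt \<Rightarrow> melt \<Rightarrow> melt" where
  "eadd x y = (fst x + fst y, snd x + snd y)"
definition esub :: "melt \<Rightarrow> melt \<Rightarrow> melt" where
  "esub x y = (fst x - fst y, snd x - snd y)"
definition escal :: "complex poly \<Rightarrow> melt \<Rightarrow> melt" where
  "escal r x = (r * fst x, r * snd x)"
definition ezero :: melt where "ezero = (0, 0)"
definition esum :: "melt list \<Rightarrow> melt" where "esum xs = foldr eadd xs ezero"

definition radd :: "relt \<Rightarrow> relt \<Rightarrow> relt" where "radd x y = (\<lambda>A. x A + y A)"
definition rzero :: relt where "rzero = (\<lambda>A. 0)"
definition rsum :: "relt list \<Rightarrow> relt" where "rsum xs = foldr radd xs rzero"
definition rscal :: "complex poly \<Rightarrow> relt \<Rightarrow> relt" where "rscal r x = (\<lambda>A. r * x A)"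
definition rgen :: "complex poly \<Rightarrow> gen \<Rightarrow> relt" where
  "rgen p B = (\<lambda>A. if A = B then p else 0)"

(* lambda-brackets of generators, [A_l B]; the ones with A after B are obtained
   from the given ones by skew-symmetry [b_l a] = -[a_{-l-d} b]. *)
fun gbr :: "complex \<Rightarrow> gen \<Rightarrow> gen \<Rightarrow> complex \<Rightarrow> relt" where
  "gbr c GL GL l = rgen [:2*l, 1:] GL"
| "gbr c GL GY l = rgen [:3/2*l + c, 1:] GY"
| "gbr c GL GM l = rgen [:2*c, 1:] GM"
| "gbr c GY GL l = rgen [:3/2*l - c, 1/2:] GY"
| "gbr c GM GL l = rgen [:-2*c, -1:] GM"
| "gbr c GY GY l = rgen ([:2*l, 1:] * [:-2*c, -1:]) GM"
| "gbr c GY GM l = rzero"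
| "gbr c GM GY l = rzero"
| "gbr c GM GM l = rzero"

(* sesquilinear extension: [(p A)_l (q B)] = p(-l) q(d+l) [A_l B] *)
definition rbr :: "complex \<Rightarrow> relt \<Rightarrow> relt \<Rightarrow> complex \<Rightarrow> relt" where
  "rbr c x y l = rsum (concat (map (\<lambda>A. map (\<lambda>B.
      rscal (smult (poly (x A) (-l)) (pcompose (y B) [:l, 1:])) (gbr c A B l)) gens) gens))"

fun act_vbar :: "complex \<Rightarrow> complex \<Rightarrow> gen \<Rightarrow> complex \<Rightarrow> melt" where
  "act_vbar a' b' GL l = ([:a' * l + b', 1:], 0)"
| "act_vbar a' b' GY l = ezero"
| "act_vbar a' b' GM l = ezero"

fun act_v :: "complex \<Rightarrow> complex \<Rightarrow> poly2 \<Rightarrow> poly2 \<Rightarrow> poly2 \<Rightarrow> gen \<Rightarrow> complex \<Rightarrow> melt" where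
  "act_v a b f g h GL l = (at_lam f l, [:a * l + b, 1:])"
| "act_v a b f g h GY l = (at_lam g l, 0)"
| "act_v a b f g h GM l = (at_lam h l, 0)"

(* full action, extended by the conformal-module rules:
   A_l (p(d) vbar + q(d) v) = p(d+l) A_l vbar + q(d+l) A_l v,  (r(d) A)_l e = r(-l) A_l e.
   The lambda-polynomial a_l e is represented by its values at all l. *)
definition act :: "complex \<Rightarrow> complex \<Rightarrow> complex \<Rightarrow> complex \<Rightarrow> poly2 \<Rightarrow> poly2 \<Rightarrow> poly2
    \<Rightarrow> relt \<Rightarrow> complex \<Rightarrow> melt \<Rightarrow> melt" where
  "act a b a' b' f g h x l e = esum (map (\<lambda>A. escal [:poly (x A) (-l):]
      (eadd (escal (pcompose (fst e) [:l, 1:]) (act_vbar a' b' A l))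
            (escal (pcompose (snd e) [:l, 1:]) (act_v a b f g h A l)))) gens)"

definition dR :: "relt \<Rightarrow> relt" where "dR x = rscal [:0, 1:] x"
definition dE :: "melt \<Rightarrow> melt" where "dE e = escal [:0, 1:] e"

(* E (with data c, a=alpha, b=beta, a'=alphabar, b'=betabar, f, g, h) is a conformal
   TSV(c)-module; polynomial identities in lambda, mu are stated for all complex values. *)
definition is_module :: "complex \<Rightarrow> complex \<Rightarrow> complex \<Rightarrow> complex \<Rightarrow> complex
    \<Rightarrow> poly2 \<Rightarrow> poly2 \<Rightarrow> poly2 \<Rightarrow> bool" where
  "is_module c a b a' b' f g h \<longleftrightarrow>
     (\<forall>x l e. act a b a' b' f g h (dR x) l e = escal [:-l:] (act a b a' b' f g h x l e)) \<and>
     (\<forall>x l e. act a b a' b' f g h x l (dE e) = escal [:l, 1:] (act a b a' b' f g h x l e)) \<and>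
     (\<forall>x y e l m. esub (act a b a' b' f g h x l (act a b a' b' f g h y m e))
                        (act a b a' b' f g h y m (act a b a' b' f g h x l e))
                  = act a b a' b' f g h (rbr c x y l) (l + m) e)"

definition ext_equiv :: "complex \<Rightarrow> complex \<Rightarrow> complex \<Rightarrow> complex \<Rightarrow> complex
    \<Rightarrow> poly2 \<times> poly2 \<times> poly2 \<Rightarrow> poly2 \<times> poly2 \<times> poly2 \<Rightarrow> bool" where
  "ext_equiv c a b a' b' P1 P2 \<longleftrightarrow>
    (case P1 of (f1, g1, h1) \<Rightarrow> case P2 of (f2, g2, h2) \<Rightarrow>
     (\<exists>\<phi> :: melt \<Rightarrow> melt.
        (\<forall>x y. \<phi> (eadd x y) = eadd (\<phi> x) (\<phi> y)) \<and>
        (\<forall>r x. \<phi> (escal r x) = escal r (\<phi> x)) \<and>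
        (\<forall>p. \<phi> (p, 0) = (p, 0)) \<and>
        (\<forall>x. snd (\<phi> x) = snd x) \<and>
        (\<forall>x l e. \<phi> (act a b a' b' f1 g1 h1 x l e) = act a b a' b' f2 g2 h2 x l (\<phi> e))))"

end

theory Submission
  imports Defs
begin


lemma melt_ext:
  fixes u v :: melt
  assumes "\<And>z. poly (fst u) z = poly (fst v) z" "\<And>z. poly (snd u) z = poly (snd v) z"
  shows "u = v"
proof -
  have "fst u = fst v" using assms(1) poly_eq_poly_eq_iff by blast
  moreover have "snd u = snd v" using assms(2) poly_eq_poly_eq_iff by blast
  ultimately show ?thesis by (simp add: prod_eq_iff)
qed

lemma act_fst:
  "poly (fst (act a b a' b' f g h x l e)) z =
     poly (x GL) (-l) * (poly (fst e) (l+z) * (a'*l+b'+z) + poly (snd e) (l+z) * poly (at_lam f l) z)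
   + poly (x GY) (-l) * poly (snd e) (l+z) * poly (at_lam g l) z
   + poly (x GM) (-l) * poly (snd e) (l+z) * poly (at_lam h l) z"
  by (cases e) (simp add: act_def esum_def gens_def eadd_def escal_def ezero_def poly_pcompose algebra_simps)

lemma act_snd:
  "poly (snd (act a b a' b' f g h x l e)) z =
     poly (x GL) (-l) * poly (snd e) (l+z) * (a*l+b+z)"
  by (cases e) (simp add: act_def esum_def gens_def eadd_def escal_def ezero_def poly_pcompose algebra_simps)

lemma rbr_L: "poly (rbr c x y l GL) w = poly (x GL) (-l) * poly (y GL) (l+w) * (2*l + w)"
  by (simp add: rbr_def rsum_def gens_def radd_def rscal_def rzero_def rgen_def poly_pcompose algebra_simps)
lemma rbr_Y: "poly (rbr c x y l GY) w = poly (x GL) (-l) * poly (y GY) (l+w) * (3/2*l + c + w)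
   + poly (x GY) (-l) * poly (y GL) (l+w) * (3/2*l - c + w/2)"
  by (simp add: rbr_def rsum_def gens_def radd_def rscal_def rzero_def rgen_def poly_pcompose algebra_simps)
lemma rbr_M: "poly (rbr c x y l GM) w = poly (x GL) (-l) * poly (y GM) (l+w) * (2*c + w)
   + poly (x GM) (-l) * poly (y GL) (l+w) * (-2*c - w)
   + poly (x GY) (-l) * poly (y GY) (l+w) * ((2*l + w) * (-2*c - w))"
  by (simp add: rbr_def rsum_def gens_def radd_def rscal_def rzero_def rgen_def poly_pcompose algebra_simps)


definition E1 :: "complex \<Rightarrow> complex \<Rightarrow> complex \<Rightarrow> complex \<Rightarrow> complex \<Rightarrow> poly2 \<Rightarrow> bool" where
 "E1 c a b a' b' g \<longleftrightarrow> (\<forall>x l m. (x + a'*l + b') * poly (at_lam g m) (x+l) - (x + m + a*l + b) * poly (at_lam g m) x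
     = (l/2 - m + c) * poly (at_lam g (l+m)) x)"

lemma at_lam_0[simp]: "at_lam 0 l = 0" by (simp add: at_lam_def)


lemma jac_alg:
  fixes xL yL xY yY Pf Qs Gm1 Gm0 Gl1 Gl0 Glm :: complex
  assumes e1: "(z + a'*l + b') * Gm1 - (z + m + a*l + b) * Gm0 = (l/2 - m + c) * Glm"
      and e2: "(z + a'*m + b') * Gl1 - (z + l + a*m + b) * Gl0 = (m/2 - l + c) * Glm"
  shows "xL * ((yL * (Pf * (a' * m + b' + (l + z))) + yY * Qs * Gm1) * (a' * l + b' + z)) +
     xY * (yL * Qs * (a * m + b + (l + z))) * Gl0 -
     (yL * ((xL * (Pf * (a' * l + b' + (m + z))) + xY * Qs * Gl1) * (a' * m + b' + z)) +
      yY * (xL * Qs * (a * l + b + (m + z))) * Gm0) =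
     xL * yL * (l - m) * (Pf * (a' * (l + m) + b' + z)) +
     (xL * yY * (l / 2 + (c - m)) + xY * yL * (3 * l / 2 - c + (- l - m) / 2)) * Qs * Glm"
proof -
  have "xL * ((yL * (Pf * (a' * m + b' + (l + z))) + yY * Qs * Gm1) * (a' * l + b' + z)) +
     xY * (yL * Qs * (a * m + b + (l + z))) * Gl0 -
     (yL * ((xL * (Pf * (a' * l + b' + (m + z))) + xY * Qs * Gl1) * (a' * m + b' + z)) +
      yY * (xL * Qs * (a * l + b + (m + z))) * Gm0) -
     (xL * yL * (l - m) * (Pf * (a' * (l + m) + b' + z)) +
     (xL * yY * (l / 2 + (c - m)) + xY * yL * (3 * l / 2 - c + (- l - m) / 2)) * Qs * Glm)
     = xL*yY*Qs*(((z + a'*l + b') * Gm1 - (z + m + a*l + b) * Gm0) - (l/2 - m + c) * Glm)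
      - xY*yL*Qs*(((z + a'*m + b') * Gl1 - (z + l + a*m + b) * Gl0) - (m/2 - l + c) * Glm)"
    by (simp add: field_simps)
  also have "... = 0" using e1 e2 by simp
  finally show ?thesis by simp
qed

lemma module_of_E1:
  assumes "E1 c a b a' b' g"
  shows "is_module c a b a' b' 0 g 0"
  unfolding is_module_def
proof (intro conjI allI)
  fix x l e
  show "act a b a' b' 0 g 0 (dR x) l e = escal [:- l:] (act a b a' b' 0 g 0 x l e)"
    by (rule melt_ext) (simp_all add: act_fst act_snd dR_def rscal_def escal_def algebra_simps)
next
  fix x l e
  show "act a b a' b' 0 g 0 x l (dE e) = escal [:l, 1:] (act a b a' b' 0 g 0 x l e)"
    by (rule melt_ext) (simp_all add: act_fst act_snd dE_def escal_def algebra_simps)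
next
  fix x y e l m
  show "esub (act a b a' b' 0 g 0 x l (act a b a' b' 0 g 0 y m e)) (act a b a' b' 0 g 0 y m (act a b a' b' 0 g 0 x l e)) =
       act a b a' b' 0 g 0 (rbr c x y l) (l + m) e"
  proof (rule melt_ext)
    fix z
    show "poly (snd (esub (act a b a' b' 0 g 0 x l (act a b a' b' 0 g 0 y m e)) (act a b a' b' 0 g 0 y m (act a b a' b' 0 g 0 x l e)))) z =
         poly (snd (act a b a' b' 0 g 0 (rbr c x y l) (l + m) e)) z"
      by (simp add: esub_def act_snd rbr_L add.assoc add.left_commute algebra_simps)
    show "poly (fst (esub (act a b a' b' 0 g 0 x l (act a b a' b' 0 g 0 y m e)) (act a b a' b' 0 g 0 y m (act a b a' b' 0 g 0 x l e)))) z =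
         poly (fst (act a b a' b' 0 g 0 (rbr c x y l) (l + m) e)) z"
    proof -
      have eq1: "(z + a'*l + b') * poly (at_lam g m) (z+l) - (z + m + a*l + b) * poly (at_lam g m) z
          = (l/2 - m + c) * poly (at_lam g (l+m)) z" using assms unfolding E1_def by blast
      have eq2: "(z + a'*m + b') * poly (at_lam g l) (z+m) - (z + l + a*m + b) * poly (at_lam g l) z
          = (m/2 - l + c) * poly (at_lam g (l+m)) z" using assms unfolding E1_def by (metis add.commute)
      have r1: "poly (fst e) (m + (l + z)) = poly (fst e) (l + m + z)" "poly (fst e) (l + (m + z)) = poly (fst e) (l + m + z)"
         "poly (snd e) (m + (l + z)) = poly (snd e) (l + m + z)" "poly (snd e) (l + (m + z)) = poly (snd e) (l + m + z)"
         "poly (at_lam g m) (l + z) = poly (at_lam g m) (z + l)" "poly (at_lam g l) (m + z) = poly (at_lam g l) (z + m)"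
        by (simp_all add: add_ac)
      show ?thesis
        apply (simp add: esub_def act_fst act_snd rbr_L rbr_Y rbr_M)
        apply (simp only: r1)
        by (rule jac_alg[OF eq1 eq2])
    qed
  qed
qed

lemma mod_jac: "is_module c a b a' b' f g h \<Longrightarrow>
  esub (act a b a' b' f g h x l (act a b a' b' f g h y m e)) (act a b a' b' f g h y m (act a b a' b' f g h x l e))
  = act a b a' b' f g h (rbr c x y l) (l+m) e"
  unfolding is_module_def by blast

lemma mod_inst_fst: "is_module c a b a' b' f g h \<Longrightarrow>
  poly (fst (act a b a' b' f g h x l (act a b a' b' f g h y m e))) z - poly (fst (act a b a' b' f g h y m (act a b a' b' f g h x l e))) z
  = poly (fst (act a b a' b' f g h (rbr c x y l) (l+m) e)) z"
  by (drule mod_jac[where x=x and y=y and l=l and m=m and e=e]) (metis esub_def fst_conv poly_diff)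

lemma mod_E1: assumes "is_module c a b a' b' f g h" shows "E1 c a b a' b' g"
  unfolding E1_def
proof (intro allI)
  fix x l m
  show "(x + a'*l + b') * poly (at_lam g m) (x+l) - (x + m + a*l + b) * poly (at_lam g m) x
     = (l/2 - m + c) * poly (at_lam g (l+m)) x"
    using mod_inst_fst[OF assms, where x="rgen 1 GL" and y="rgen 1 GY" and l=l and m=m and e="(0,1)" and z=x]
    by (simp add: act_fst act_snd rbr_L rbr_Y rbr_M rgen_def algebra_simps)
qed

lemma mod_H: assumes "is_module c a b a' b' f g h" shows
  "(x + a'*l + b') * poly (at_lam h m) (x+l) - (x + m + a*l + b) * poly (at_lam h m) x
     = (2*c - l - m) * poly (at_lam h (l+m)) x"
    using mod_inst_fst[OF assms, where x="rgen 1 GL" and y="rgen 1 GM" and l=l and m=m and e="(0,1)" and z=x]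
    by (simp add: act_fst act_snd rbr_L rbr_Y rbr_M rgen_def algebra_simps)

lemma mod_F: assumes "is_module c a b a' b' f g h" shows
  "(b - b') * poly (at_lam f l) x = (x + a*l + b) * poly (at_lam f 0) x - (x + a'*l + b') * poly (at_lam f 0) (x+l)"
proof -
  have "poly (fst (act a b a' b' f g h (rgen 1 GL) l (act a b a' b' f g h (rgen 1 GL) 0 (0,1)))) x - poly (fst (act a b a' b' f g h (rgen 1 GL) 0 (act a b a' b' f g h (rgen 1 GL) l (0,1)))) x
  = poly (fst (act a b a' b' f g h (rbr c (rgen 1 GL) (rgen 1 GL) l) (l+0) (0,1))) x"
    by (rule mod_inst_fst[OF assms])
  then show ?thesis
    by (simp add: act_fst act_snd rbr_L rbr_Y rbr_M rgen_def algebra_simps)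
qed


lemma poly2_zero:
  fixes F :: poly2
  assumes "infinite S" "\<And>l x. l \<in> S \<Longrightarrow> poly (poly F [:l:]) x = 0"
  shows "F = 0"
proof (rule ccontr)
  assume F: "F \<noteq> 0"
  have "(\<lambda>l. [:l:]) ` S \<subseteq> {p. poly F p = 0}"
    using assms(2) poly_all_0_iff_0 by blast
  moreover have "infinite ((\<lambda>l. [:l:]) ` S)"
    using assms(1) by (simp add: finite_image_iff inj_on_def)
  ultimately show False using poly_roots_finite[OF F] finite_subset by blast
qed

lemma mod_h0:
  assumes "is_module c a b a' b' f g h" "b - b' + c = 0" "b \<noteq> b'"
  shows "h = 0"
proof (rule poly2_zero[where S=UNIV])
  show "infinite (UNIV :: complex set)" by (rule infinite_UNIV_char_0)
  fix m x :: complex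
  have "(x + a'*0 + b') * poly (at_lam h m) (x+0) - (x + m + a*0 + b) * poly (at_lam h m) x
     = (2*c - 0 - m) * poly (at_lam h (0+m)) x" by (rule mod_H[OF assms(1)])
  then have "(b' - b - 2*c) * poly (at_lam h m) x = 0"
    by (simp add: algebra_simps)
  moreover have "b' - b - 2*c = - c" using assms(2) by (simp add: algebra_simps)
  ultimately have "c * poly (at_lam h m) x = 0" by simp
  moreover have "c \<noteq> 0" using assms(2,3) by auto
  ultimately show "poly (poly h [:m:]) x = 0" by (simp add: at_lam_def)
qed

lemma equiv_f0:
  assumes "is_module c a b a' b' f g h" "b \<noteq> b'"
  shows "ext_equiv c a b a' b' (f, g, h) (0, g, h)"
proof -
  define s where "s = smult (-1/(b-b')) (at_lam f 0)"
  have fs: "poly (at_lam f l) x = poly s (l+x) * (a'*l + b' + x) - (a*l + b + x) * poly s x" for l x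
  proof -
    have "(b - b') * poly (at_lam f l) x = (x + a*l + b) * poly (at_lam f 0) x - (x + a'*l + b') * poly (at_lam f 0) (x+l)"
      by (rule mod_F[OF assms(1)])
    moreover have nz: "b - b' \<noteq> 0" using assms(2) by simp
    ultimately have "poly (at_lam f l) x = ((x + a*l + b) * poly (at_lam f 0) x - (x + a'*l + b') * poly (at_lam f 0) (x+l)) / (b - b')"
      by (simp add: eq_divide_eq mult.commute)
    also have "... = poly s (l+x) * (a'*l + b' + x) - (a*l + b + x) * poly s x"
      unfolding s_def using nz by (simp add: divide_inverse algebra_simps)
    finally show ?thesis .
  qed
  show ?thesis
    unfolding ext_equiv_def
    apply simp
    apply (rule exI[where x="\<lambda>u. (fst u + snd u * s, snd u)"])
    apply (intro conjI allI)
        apply (simp add: eadd_def algebra_simps)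
       apply (simp add: escal_def algebra_simps)
      apply simp
     apply simp
    apply (rule melt_ext)
     apply (simp add: act_fst act_snd fs algebra_simps)
    apply (simp add: act_snd)
    done
qed

lemma nontriv:
  assumes "b \<noteq> b'"
  shows "ext_equiv c a b a' b' (0, g, 0) (0, 0, 0) \<longleftrightarrow> g = 0"
proof
  assume "g = 0"
  then show "ext_equiv c a b a' b' (0, g, 0) (0, 0, 0)"
    unfolding ext_equiv_def apply simp apply (rule exI[where x=id]) by simp
next
  assume "ext_equiv c a b a' b' (0, g, 0) (0, 0, 0)"
  then obtain \<phi> where add: "\<And>x y. \<phi> (eadd x y) = eadd (\<phi> x) (\<phi> y)"
    and sc: "\<And>r x. \<phi> (escal r x) = escal r (\<phi> x)"
    and id1: "\<And>p. \<phi> (p, 0) = (p, 0)" and sn: "\<And>x. snd (\<phi> x) = snd x"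
    and int: "\<And>x l e. \<phi> (act a b a' b' 0 g 0 x l e) = act a b a' b' 0 0 0 x l (\<phi> e)"
    unfolding ext_equiv_def prod.case by blast
  define s where "s = fst (\<phi> (0, 1))"
  have p01: "\<phi> (0, 1) = (s, 1)" using sn[of "(0,1)"] unfolding s_def by (metis prod.collapse snd_conv)
  have form: "\<phi> (p, q) = (p + q * s, q)" for p q
  proof -
    have "(p, q) = eadd (p, 0) (escal q (0, 1))" by (simp add: eadd_def escal_def)
    then have "\<phi> (p, q) = eadd (\<phi> (p,0)) (escal q (\<phi> (0, 1)))" using add sc by metis
    then show ?thesis using id1 p01 by (simp add: eadd_def escal_def)
  qed
  have form': "\<phi> u = (fst u + snd u * s, snd u)" for u using form[of "fst u" "snd u"] by simp
  have s0: "s = 0"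
  proof -
    have "poly s z = 0" for z
    proof -
      have "\<phi> (act a b a' b' 0 g 0 (rgen 1 GL) 0 (0,1)) = act a b a' b' 0 0 0 (rgen 1 GL) 0 (s, 1)"
        using int p01 by metis
      then have "poly (fst (\<phi> (act a b a' b' 0 g 0 (rgen 1 GL) 0 (0,1)))) z = poly (fst (act a b a' b' 0 0 0 (rgen 1 GL) 0 (s, 1))) z"
        by simp
      then have "(b - b') * poly s z = 0"
        by (simp add: form' act_fst act_snd rgen_def algebra_simps)
      then show ?thesis using assms by simp
    qed
    then show ?thesis using poly_all_0_iff_0 by blast
  qed
  show "g = 0"
  proof (rule poly2_zero[where S=UNIV])
    show "infinite (UNIV :: complex set)" by (rule infinite_UNIV_char_0)
    fix l z :: complex
    have "\<phi> (act a b a' b' 0 g 0 (rgen 1 GY) l (0,1)) = act a b a' b' 0 0 0 (rgen 1 GY) l (s, 1)"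
      using int p01 by metis
    then have "poly (fst (\<phi> (act a b a' b' 0 g 0 (rgen 1 GY) l (0,1)))) z = poly (fst (act a b a' b' 0 0 0 (rgen 1 GY) l (s, 1))) z"
      by simp
    then show "poly (poly g [:l:]) z = 0"
      by (simp add: form' act_fst act_snd rgen_def s0 at_lam_def)
  qed
qed




lemma ev_Cst[simp]: "poly (poly (Cst k) [:l:]) x = k" by (simp add: Cst_def)
lemma ev_Dv[simp]: "poly (poly Dv [:l:]) x = x" by (simp add: Dv_def)
lemma ev_Lv[simp]: "poly (poly Lv [:l:]) x = l" by (simp add: Lv_def)
lemma ev_Cst0[simp]: "poly (poly (Cst k) 0) x = k" by (simp add: Cst_def)
lemma ev_Dv0[simp]: "poly (poly Dv 0) x = x" by (simp add: Dv_def)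
lemma ev_Lv0[simp]: "poly (poly Lv 0) x = 0" by (simp add: Lv_def)

lemma E1_T0: "a - a' = -1/2 \<Longrightarrow> b - b' + c = 0 \<Longrightarrow> E1 c a b a' b' (Cst k)"
proof -
  assume h: "a - a' = -1/2" "b - b' + c = 0"
  then have ha: "a = a' - 1/2" using h(1) by (auto simp: field_simps)
  from h have hb: "b = b' - c" by (simp_all add: algebra_simps)
  show ?thesis unfolding E1_def at_lam_def ha hb by (simp add: algebra_simps)
qed

lemma E1_T1: "a - a' = 1/2 \<Longrightarrow> b - b' + c = 0 \<Longrightarrow>
   E1 c a b a' b' (Cst k * (Dv + Cst (2*a') * Lv + Cst (-2*a'*c + b')))"
proof -
  assume h: "a - a' = 1/2" "b - b' + c = 0"
  then have ha: "a = a' + 1/2" using h(1) by (metis add.commute diff_add_cancel)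
  from h have hb: "b = b' - c" by (simp_all add: algebra_simps)
  show ?thesis unfolding E1_def at_lam_def ha hb by (simp add: algebra_simps)
qed

lemma E1_T2: "a = 1 \<Longrightarrow> a' = -1/2 \<Longrightarrow> b - b' + c = 0 \<Longrightarrow>
   E1 c a b a' b' (Cst k * (Dv^2 + Cst (2*(1 + 2*a')) * Dv * Lv + Cst (2*a') * Lv^2
                       + Cst (2*b' - 2*(1 + 2*a')*c) * Dv
                       + Cst (-4*c*a' + 2*(1 + 2*a')*b') * Lv
                       + Cst (b'^2 - 2*c*b'*(1 + 2*a') + 2*c^2*a')))"
proof -
  assume h: "a = 1" "a' = -1/2" "b - b' + c = 0"
  then have hb: "b = b' - c" by (simp_all add: algebra_simps)
  show ?thesis unfolding E1_def at_lam_def h(1,2) hb by (simp add: algebra_simps power2_eq_square)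
qed

lemma E1_R: "E1 c a b a' b' g \<Longrightarrow>
  (l/2 + c) * poly (at_lam g l) x = (x + a'*l + b') * poly (at_lam g 0) (x+l) - (x + a*l + b) * poly (at_lam g 0) x"
  unfolding E1_def by (drule spec[where x=x], drule spec[where x=l], drule spec[where x=0]) (simp add: algebra_simps)

lemma agree:
  assumes "E1 c a b a' b' g" "E1 c a b a' b' T" "\<And>x. poly (at_lam g 0) x = poly (at_lam T 0) x"
  shows "g = T"
proof -
  have "g - T = 0"
  proof (rule poly2_zero[where S="UNIV - {-2*c}"])
    show "infinite (UNIV - {-2*c} :: complex set)"
      by (simp add: infinite_UNIV_char_0)
    fix l x assume l: "l \<in> UNIV - {-2*c}"
    have "(l/2 + c) * poly (at_lam g l) x = (l/2 + c) * poly (at_lam T l) x"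
      using E1_R[OF assms(1), of l x] E1_R[OF assms(2), of l x] assms(3) by simp
    moreover have "l/2 + c \<noteq> 0" using l by (auto simp: field_simps eq_neg_iff_add_eq_0)
    ultimately show "poly (poly (g - T) [:l:]) x = 0" by (simp add: at_lam_def)
  qed
  then show ?thesis by simp
qed

lemma shift_zero:
  fixes w :: "complex poly"
  assumes u: "u \<noteq> 0" and D: "\<And>y. y * poly w (y - u) = (y - v*u) * poly w y"
    and z: "poly w (- (of_nat (Suc k0)) * u) = 0"
  shows "w = 0"
proof -
  have all: "poly w (- (of_nat (Suc k0 + n)) * u) = 0" for n
  proof (induction n)
    case 0 then show ?case using z by simp
  next
    case (Suc n)
    define y where "y = - (of_nat (Suc k0 + n)) * (u::complex)"
    have nz: "(of_nat (Suc (k0 + n))::complex) \<noteq> 0" by (rule of_nat_neq_0)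
    have "y \<noteq> 0" using u nz unfolding y_def by (metis add_Suc mult_eq_0_iff neg_equal_0_iff_equal)
    moreover have "y * poly w (y - u) = 0" using D[of y] Suc by (simp add: y_def)
    ultimately have "poly w (y - u) = 0" by simp
    moreover have "y - u = - (of_nat (Suc k0 + Suc n)) * u" by (simp add: y_def algebra_simps)
    ultimately show ?case by simp
  qed
  show ?thesis
  proof (rule ccontr)
    assume "w \<noteq> 0"
    then have fin: "finite {x. poly w x = 0}" by (rule poly_roots_finite)
    have "range (\<lambda>n. - (of_nat (Suc k0 + n)) * u) \<subseteq> {x. poly w x = 0}" using all by auto
    moreover have "inj (\<lambda>n. - (of_nat (Suc k0 + n)) * u)"
    proof (rule injI)
      fix n m assume "- (of_nat (Suc k0 + n)) * u = - (of_nat (Suc k0 + m)) * u"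
      then have "(of_nat (Suc k0 + n)::complex) = of_nat (Suc k0 + m)" using u by simp
      then show "n = m" by (simp only: of_nat_eq_iff)
    qed
    then have "infinite (range (\<lambda>n. - (of_nat (Suc k0 + n)) * u))"
      by (rule range_inj_infinite)
    ultimately show False using fin finite_subset by blast
  qed
qed


lemma generic_contra:
  fixes a a' :: complex
  assumes A: "(2*a' + 2*a - 1) * (2*a' + 2*a - 3) = 0" and B: "2*a' + 4*a - 5 = 0"
    and C: "2*a'^2 - a' - 2 = 0" and nv: "a - a' \<noteq> 1/2"
  shows False
proof -
  have ha: "a = (5 - 2*a')/4" using B by (simp add: field_simps)
  have e: "(2*a' + 2*a - 1) * (2*a' + 2*a - 3) = (a' + 3/2) * (a' - 1/2)"
    unfolding ha by (simp add: field_simps)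
  have "(a' + 3/2) * (a' - 1/2) = 0" using A unfolding e by simp
  then have "a' = -3/2 \<or> a' = 1/2" by (simp add: eq_neg_iff_add_eq_0)
  then show False
  proof
    assume "a' = -3/2" then show False using C by (simp add: power2_eq_square)
  next
    assume h: "a' = 1/2" then have "a = 1" using ha by (simp add: field_simps)
    then show False using nv h by simp
  qed
qed


lemma classify:
  assumes E: "E1 c a b a' b' g" and gnz: "g \<noteq> 0" and a'0: "a' \<noteq> 0" and c0: "c \<noteq> 0"
    and bb: "b - b' + c = 0"
  shows "\<exists>k. k \<noteq> 0 \<and>
               ((a - a' = -1/2 \<and> g = Cst k)
              \<or> (a - a' = 1/2 \<and> g = Cst k * (Dv + Cst (2*a') * Lv + Cst (-2*a'*c + b')))
              \<or> (a = 1 \<and> a' = -1/2 \<and>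
                  g = Cst k * (Dv^2 + Cst (2*(1 + 2*a')) * Dv * Lv + Cst (2*a') * Lv^2
                       + Cst (2*b' - 2*(1 + 2*a')*c) * Dv
                       + Cst (-4*c*a' + 2*(1 + 2*a')*b') * Lv
                       + Cst (b'^2 - 2*c*b'*(1 + 2*a') + 2*c^2*a'))))"
proof -
  define G where "G l x = poly (at_lam g l) x" for l x
  have Ei: "\<And>x l m. (x + a'*l + b') * G m (x+l) - (x + m + a*l + b) * G m x = (l/2 - m + c) * G (l+m) x"
    using E unfolding E1_def G_def by blast
  have R: "\<And>x l. (l/2 + c) * G l x = (x + a'*l + b') * G 0 (x+l) - (x + a*l + b) * G 0 x"
    unfolding G_def by (rule E1_R[OF E])
  have hb: "b = b' - c" using bb by (simp add: algebra_simps)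
  define r where "r = 2*c*a' - b'"
  define qp where "qp = pcompose (at_lam g 0) [:r, 1:]"
  have Q: "\<And>y. poly qp y = G 0 (r + y)" by (simp add: qp_def G_def poly_pcompose add.commute)
  define v where "v = a - a' + 1/2"
  have D: "\<And>y. y * poly qp (y - 2*c) = (y - v*(2*c)) * poly qp y"
  proof -
    fix y
    have e: "0 = (r + y + a'*(-(2*c)) + b') * G 0 (r + y + -(2*c)) - (r + y + a*(-(2*c)) + b) * G 0 (r + y)"
      using R[where x="r + y" and l="-(2*c)"] by simp
    have c1: "r + y + a'*(-(2*c)) + b' = y" by (simp add: r_def)
    have c2: "r + y + a*(-(2*c)) + b = y - v*(2*c)" by (simp add: r_def v_def hb algebra_simps)
    have c3: "r + y + -(2*c) = r + (y - 2*c)" by simp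
    have "0 = y * G 0 (r + (y - 2*c)) - (y - v*(2*c)) * G 0 (r + y)"
      using e unfolding c1 c2 c3 .
    then show "y * poly qp (y - 2*c) = (y - v*(2*c)) * poly qp y" unfolding Q by simp
  qed
  have lnz: "l/2 + c \<noteq> 0" if "l \<in> UNIV - {-2*c}" for l using that by (auto simp: field_simps eq_neg_iff_add_eq_0)
  have infS: "infinite (UNIV - {-2*c} :: complex set)" by (simp add: infinite_UNIV_char_0)
  have P0: "at_lam g 0 \<noteq> 0"
  proof
    assume z: "at_lam g 0 = 0"
    have "g = 0"
    proof (rule poly2_zero[OF infS])
      fix l x assume l: "l \<in> UNIV - {-2*c}"
      have "(l/2+c) * G l x = 0" using R[of l x] z by (simp add: G_def)
      then show "poly (poly g [:l:]) x = 0" using lnz[OF l] by (simp add: G_def at_lam_def)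
    qed
    with gnz show False by simp
  qed
  have qpnz: "qp \<noteq> 0"
  proof
    assume "qp = 0"
    then have "poly (at_lam g 0) x = 0" for x using Q[of "x - r"] by (simp add: G_def)
    then show False using P0 poly_all_0_iff_0 by blast
  qed
  have u0: "2*c \<noteq> 0" using c0 by simp
  have "poly qp (- (of_nat (Suc 0)) * (2*c)) \<noteq> 0" using shift_zero[OF u0 D] qpnz by blast
  then have q1: "G 0 (r - 2*c) \<noteq> 0" using Q[of "-(2*c)"] by simp
  have "poly qp (- (of_nat (Suc 1)) * (2*c)) \<noteq> 0" using shift_zero[OF u0 D] qpnz by blast
  then have q2: "G 0 (r - 4*c) \<noteq> 0" using Q[of "-(4*c)"] by simp
  have vcases: "v = 0 \<or> v = 1 \<or> v = 2"
  proof (rule ccontr)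
    assume nv: "\<not> (v = 0 \<or> v = 1 \<or> v = 2)"
    have Q0: "G 0 r = 0"
    proof -
      have "0 * poly qp (0 - 2*c) = (0 - v*(2*c)) * poly qp 0" by (rule D)
      then have "v * (2*c) * G 0 r = 0" using Q[of 0] by simp
      then show ?thesis using nv u0 by simp
    qed
    have Q1: "G 0 (r + 2*c) = 0"
    proof -
      have "(2*c) * poly qp (2*c - 2*c) = (2*c - v*(2*c)) * poly qp (2*c)" by (rule D)
      then have "((1 - v)*(2*c)) * G 0 (r + 2*c) = 0" using Q[of 0] Q[of "2*c"] Q0 by (simp add: algebra_simps)
      moreover have "(1 - v)*(2*c) \<noteq> 0" using nv u0 by simp
      ultimately show ?thesis by simp
    qed
    have Q2: "G 0 (r + 4*c) = 0"
    proof -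
      have "(4*c) * poly qp (4*c - 2*c) = (4*c - v*(2*c)) * poly qp (4*c)" by (rule D)
      moreover have "4*c - 2*c = 2*c" by simp
      ultimately have "(4*c - v*(2*c)) * G 0 (r + 4*c) = 0" using Q[of "2*c"] Q[of "4*c"] Q1 by simp
      moreover have "4*c - v*(2*c) = (2 - v)*(2*c)" by (simp add: algebra_simps)
      moreover have "(2 - v)*(2*c) \<noteq> 0" using nv u0 by simp
      ultimately show ?thesis by simp
    qed
    have k1: "2*c/2 + c = 2*c" by simp
    have k0: "2*c/2 - 2*c + c = 0" by simp
    have i1: "(2*c/2 + c) * G (2*c) r = (r + a'*(2*c) + b') * G 0 (r + 2*c) - (r + a*(2*c) + b) * G 0 r"
      by (rule R)
    have Y0: "G (2*c) r = 0" using i1 Q0 Q1 u0 unfolding k1 by simp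
    have i2: "(2*c/2 + c) * G (2*c) (r - 2*c) = (r - 2*c + a'*(2*c) + b') * G 0 (r - 2*c + 2*c) - (r - 2*c + a*(2*c) + b) * G 0 (r - 2*c)"
      by (rule R)
    have i2': "2*c * G (2*c) (r - 2*c) = - ((r - 2*c + a*(2*c) + b) * G 0 (r - 2*c))"
      using i2 Q0 unfolding k1 by simp
    have i3: "(r - 2*c + a'*(2*c) + b') * G (2*c) (r - 2*c + 2*c) - (r - 2*c + 2*c + a*(2*c) + b) * G (2*c) (r - 2*c)
       = (2*c/2 - 2*c + c) * G (2*c + 2*c) (r - 2*c)" by (rule Ei)
    have A1: "(r + a*(2*c) + b) * G (2*c) (r - 2*c) = 0" using i3 Y0 unfolding k0 by simp
    have "(r + a*(2*c) + b) * (2*c * G (2*c) (r - 2*c)) = 0" using A1 by (metis mult.left_commute mult_zero_right)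
    then have "(r + a*(2*c) + b) * (r - 2*c + a*(2*c) + b) * G 0 (r - 2*c) = 0" unfolding i2' by simp
    moreover have "r + a*(2*c) + b = c * (2*a' + 2*a - 1)" by (simp add: r_def hb algebra_simps)
    moreover have "r - 2*c + a*(2*c) + b = c * (2*a' + 2*a - 3)" by (simp add: r_def hb algebra_simps)
    ultimately have eqA: "(2*a' + 2*a - 1) * (2*a' + 2*a - 3) = 0" using q1 c0 by simp
    have k3: "4*c/2 + c = 3*c" by simp
    have j1: "(4*c/2 + c) * G (4*c) (r - 4*c) = (r - 4*c + a'*(4*c) + b') * G 0 (r - 4*c + 4*c) - (r - 4*c + a*(4*c) + b) * G 0 (r - 4*c)"
      by (rule R)
    have j1': "3*c * G (4*c) (r - 4*c) = - ((r - 4*c + a*(4*c) + b) * G 0 (r - 4*c))"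
      using j1 Q0 unfolding k3 by simp
    have j2: "(4*c/2 + c) * G (4*c) r = (r + a'*(4*c) + b') * G 0 (r + 4*c) - (r + a*(4*c) + b) * G 0 r"
      by (rule R)
    have Z2: "G (4*c) r = 0" using j2 Q0 Q2 c0 unfolding k3 by simp
    have j3: "(r + a'*(-(4*c)) + b') * G (4*c) (r + -(4*c)) - (r + 4*c + a*(-(4*c)) + b) * G (4*c) r
       = (-(4*c)/2 - 4*c + c) * G (-(4*c) + 4*c) r" by (rule Ei)
    have B1: "(r + a'*(-(4*c)) + b') * G (4*c) (r - 4*c) = 0" using j3 Z2 Q0 by simp
    have "(r + a'*(-(4*c)) + b') * (3*c * G (4*c) (r - 4*c)) = 0" using B1 by (metis mult.left_commute mult_zero_right)
    then have F: "(r + a'*(-(4*c)) + b') * (- ((r - 4*c + a*(4*c) + b) * G 0 (r - 4*c))) = 0" unfolding j1' .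
    have K4b: "r + a'*(-(4*c)) + b' = c * (-2*a')" by (simp add: r_def algebra_simps)
    have K3b: "r - 4*c + a*(4*c) + b = c * (2*a' + 4*a - 5)" by (simp add: r_def hb algebra_simps)
    from F have "(c * (-2*a')) * (- ((c * (2*a' + 4*a - 5)) * G 0 (r - 4*c))) = 0" unfolding K4b K3b .
    then have eqB: "2*a' + 4*a - 5 = 0" using q2 c0 a'0 by simp
    have k4: "-(4*c)/2 + c = -c" by simp
    have k8: "-(8*c)/2 + c = -(3*c)" by simp
    have l1: "(-(4*c)/2 + c) * G (-(4*c)) r = (r + a'*(-(4*c)) + b') * G 0 (r + -(4*c)) - (r + a*(-(4*c)) + b) * G 0 r"
      by (rule R)
    have "- (c * G (-(4*c)) r) = (r + a'*(-(4*c)) + b') * G 0 (r - 4*c)"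
      using l1 Q0 unfolding k4 by simp
    then have m1: "c * G (-(4*c)) r = - ((r + a'*(-(4*c)) + b') * G 0 (r - 4*c))"
      by (metis minus_minus)
    have l2: "(-(4*c)/2 + c) * G (-(4*c)) (r + 4*c) = (r + 4*c + a'*(-(4*c)) + b') * G 0 (r + 4*c + -(4*c)) - (r + 4*c + a*(-(4*c)) + b) * G 0 (r + 4*c)"
      by (rule R)
    have W2: "G (-(4*c)) (r + 4*c) = 0" using l2 Q0 Q2 c0 unfolding k4 by simp
    have l3: "(-(8*c)/2 + c) * G (-(8*c)) (r + 4*c) = (r + 4*c + a'*(-(8*c)) + b') * G 0 (r + 4*c + -(8*c)) - (r + 4*c + a*(-(8*c)) + b) * G 0 (r + 4*c)"
      by (rule R)
    have a48: "r + 4*c + -(8*c) = r - 4*c" by simp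
    have "- (3*c * G (-(8*c)) (r + 4*c)) = (r + 4*c + a'*(-(8*c)) + b') * G 0 (r - 4*c)"
      using l3 Q2 unfolding k8 a48 by simp
    then have m3: "3*c * G (-(8*c)) (r + 4*c) = - ((r + 4*c + a'*(-(8*c)) + b') * G 0 (r - 4*c))"
      by (metis minus_minus)
    have l4: "(r + 4*c + a'*(-(4*c)) + b') * G (-(4*c)) (r + 4*c + -(4*c)) - (r + 4*c + -(4*c) + a*(-(4*c)) + b) * G (-(4*c)) (r + 4*c)
       = (-(4*c)/2 - -(4*c) + c) * G (-(4*c) + -(4*c)) (r + 4*c)" by (rule Ei)
    have a44: "r + 4*c + -(4*c) = r" by simp
    have k5: "-(4*c)/2 - -(4*c) + c = 3*c" by simp
    have a88: "-(4*c) + -(4*c) = -(8*c)" by simp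
    have m4: "(r + 4*c + a'*(-(4*c)) + b') * G (-(4*c)) r = 3*c * G (-(8*c)) (r + 4*c)"
      using l4 W2 unfolding a44 k5 a88 by simp
    have "(r + 4*c + a'*(-(4*c)) + b') * (c * G (-(4*c)) r) = c * (3*c * G (-(8*c)) (r + 4*c))"
      using m4 by (metis mult.left_commute)
    then have eqc: "(r + 4*c + a'*(-(4*c)) + b') * (- ((r + a'*(-(4*c)) + b') * G 0 (r - 4*c)))
        = c * (- ((r + 4*c + a'*(-(8*c)) + b') * G 0 (r - 4*c)))" unfolding m1 m3 .
    have K4: "r + a'*(-(4*c)) + b' = c * (-2*a')" by (simp add: r_def algebra_simps)
    have K5: "r + 4*c + a'*(-(8*c)) + b' = c * (4 - 6*a')" by (simp add: r_def algebra_simps)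
    have K6: "r + 4*c + a'*(-(4*c)) + b' = c * (4 - 2*a')" by (simp add: r_def algebra_simps)
    have eqc2: "c * (4 - 2*a') * (- (c * (-2*a') * G 0 (r - 4*c))) = c * (- (c * (4 - 6*a') * G 0 (r - 4*c)))"
      using eqc unfolding K4 K5 K6 by simp
    have "(2*a'^2 - a' - 2) * (c * c * G 0 (r - 4*c)) =
        ((c * (- (c * (4 - 6*a') * G 0 (r - 4*c)))) - (c * (4 - 2*a') * (- (c * (-2*a') * G 0 (r - 4*c)))))/2"
      by (simp add: field_simps power2_eq_square)
    then have "(2*a'^2 - a' - 2) * (c * c * G 0 (r - 4*c)) = 0" using eqc2 by simp
    then have eqC: "2*a'^2 - a' - 2 = 0" using q2 c0 by simp
    have "a - a' \<noteq> 1/2"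
    proof
      assume h: "a - a' = 1/2" then have "v = 1" unfolding v_def h by simp
      with nv show False by simp
    qed
    then show False using generic_contra[OF eqA eqB eqC] by blast
  qed
  define q where "q = G 0 (r - 2*c)"
  have qnz: "q \<noteq> 0" using q1 by (simp add: q_def)
  have wq: "poly qp (- (of_nat (Suc 0)) * (2*c)) = q" using Q[of "-(2*c)"] by (simp add: q_def)
  have Gx: "G 0 x = poly qp (x - r)" for x using Q[of "x - r"] by simp
  from vcases consider (v0) "v = 0" | (v1) "v = 1" | (v2) "v = 2" by blast
  then show ?thesis
  proof cases
    case v0
    define w where "w = qp - [:q:]"
    have Dw: "y * poly w (y - 2*c) = (y - v*(2*c)) * poly w y" for y
      using D[of y] v0 by (simp add: w_def algebra_simps)
    have "poly w (- (of_nat (Suc 0)) * (2*c)) = 0" using wq by (simp add: w_def)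
    then have "w = 0" by (rule shift_zero[OF u0 Dw])
    then have Gc: "G 0 x = q" for x using Gx[of x] by (simp add: w_def)
    have ha: "a - a' = -1/2" using v0 unfolding v_def by (simp add: field_simps)
    have "g = Cst q" by (rule agree[OF E E1_T0[OF ha bb]]) (use Gc[unfolded G_def] in \<open>simp add: at_lam_def\<close>)
    then show ?thesis using qnz ha by blast
  next
    case v1
    define k where "k = - q / (2*c)"
    have knz: "k \<noteq> 0" using qnz c0 by (simp add: k_def)
    define w where "w = qp - smult k [:0, 1:]"
    have Dw: "y * poly w (y - 2*c) = (y - v*(2*c)) * poly w y" for y
      using D[of y] v1 by (simp add: w_def algebra_simps)
    have "poly w (- (of_nat (Suc 0)) * (2*c)) = 0" using wq c0 by (simp add: w_def k_def)
    then have "w = 0" by (rule shift_zero[OF u0 Dw])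
    then have Gc: "G 0 x = k * (x - r)" for x using Gx[of x] by (simp add: w_def)
    have ha: "a - a' = 1/2" using v1 unfolding v_def by (simp add: field_simps)
    have "g = Cst k * (Dv + Cst (2*a') * Lv + Cst (-2*a'*c + b'))"
      by (rule agree[OF E E1_T1[OF ha bb]]) (use Gc[unfolded G_def] in \<open>simp add: at_lam_def r_def algebra_simps\<close>)
    then show ?thesis using knz ha by blast
  next
    case v2
    define k where "k = q / (8*c^2)"
    have knz: "k \<noteq> 0" using qnz c0 by (simp add: k_def)
    define w where "w = qp - smult k ([:0, 1:] * [:-(2*c), 1:])"
    have Dw: "y * poly w (y - 2*c) = (y - v*(2*c)) * poly w y" for y
      using D[of y] v2 by (simp add: w_def algebra_simps)
    have "poly w (- (of_nat (Suc 0)) * (2*c)) = 0" using wq c0 by (simp add: w_def k_def field_simps power2_eq_square)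
    then have "w = 0" by (rule shift_zero[OF u0 Dw])
    then have Gc: "G 0 x = k * (x - r) * (x - r - 2*c)" for x using Gx[of x] by (simp add: w_def algebra_simps)
    have ha0: "a = a' + 3/2" using v2 unfolding v_def by (simp add: field_simps)
    have k1: "2*c/2 + c = 2*c" by simp
    have k0: "2*c/2 - 2*c + c = 0" by simp
    have s42: "r - 4*c + 2*c = r - 2*c" by simp
    have i1: "(2*c/2 + c) * G (2*c) (r - 2*c) = (r - 2*c + a'*(2*c) + b') * G 0 (r - 2*c + 2*c) - (r - 2*c + a*(2*c) + b) * G 0 (r - 2*c)"
      by (rule R)
    have e1: "2*c * G (2*c) (r - 2*c) = (r - 2*c + a'*(2*c) + b') * G 0 r - (r - 2*c + a*(2*c) + b) * G 0 (r - 2*c)"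
      using i1 unfolding k1 by simp
    have i2: "(2*c/2 + c) * G (2*c) (r - 4*c) = (r - 4*c + a'*(2*c) + b') * G 0 (r - 4*c + 2*c) - (r - 4*c + a*(2*c) + b) * G 0 (r - 4*c)"
      by (rule R)
    have e2: "2*c * G (2*c) (r - 4*c) = (r - 4*c + a'*(2*c) + b') * G 0 (r - 2*c) - (r - 4*c + a*(2*c) + b) * G 0 (r - 4*c)"
      using i2 unfolding k1 s42 .
    have i3: "(r - 4*c + a'*(2*c) + b') * G (2*c) (r - 4*c + 2*c) - (r - 4*c + 2*c + a*(2*c) + b) * G (2*c) (r - 4*c)
       = (2*c/2 - 2*c + c) * G (2*c + 2*c) (r - 4*c)" by (rule Ei)
    have e3: "(r - 4*c + a'*(2*c) + b') * G (2*c) (r - 2*c) - (r - 2*c + a*(2*c) + b) * G (2*c) (r - 4*c) = 0"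
      using i3 unfolding k0 s42 by simp
    have "(r - 4*c + a'*(2*c) + b') * (2*c * G (2*c) (r - 2*c)) - (r - 2*c + a*(2*c) + b) * (2*c * G (2*c) (r - 4*c))
        = 2*c * ((r - 4*c + a'*(2*c) + b') * G (2*c) (r - 2*c) - (r - 2*c + a*(2*c) + b) * G (2*c) (r - 4*c))"
      by (simp add: algebra_simps)
    also have "... = 0" using e3 by simp
    finally have e4: "(r - 4*c + a'*(2*c) + b') * ((r - 2*c + a'*(2*c) + b') * G 0 r - (r - 2*c + a*(2*c) + b) * G 0 (r - 2*c))
       - (r - 2*c + a*(2*c) + b) * ((r - 4*c + a'*(2*c) + b') * G 0 (r - 2*c) - (r - 4*c + a*(2*c) + b) * G 0 (r - 4*c)) = 0"
      unfolding e1 e2 .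
    have "(r - 4*c + a'*(2*c) + b') * ((r - 2*c + a'*(2*c) + b') * G 0 r - (r - 2*c + a*(2*c) + b) * G 0 (r - 2*c))
       - (r - 2*c + a*(2*c) + b) * ((r - 4*c + a'*(2*c) + b') * G 0 (r - 2*c) - (r - 4*c + a*(2*c) + b) * G 0 (r - 4*c))
       = 64 * c^4 * k * (a' * (2*a' + 1))"
      unfolding Gc ha0 hb r_def by (simp add: algebra_simps power2_eq_square power4_eq_xxxx)
    then have "64 * c^4 * k * (a' * (2*a' + 1)) = 0" using e4 by simp
    then have "2*a' + 1 = 0" using c0 knz a'0 by simp
    then have ha': "a' = -1/2" by (simp add: field_simps eq_neg_iff_add_eq_0)
    have ha: "a = 1" using ha0 ha' by simp
    have "g = Cst k * (Dv^2 + Cst (2*(1 + 2*a')) * Dv * Lv + Cst (2*a') * Lv^2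
                       + Cst (2*b' - 2*(1 + 2*a')*c) * Dv
                       + Cst (-4*c*a' + 2*(1 + 2*a')*b') * Lv
                       + Cst (b'^2 - 2*c*b'*(1 + 2*a') + 2*c^2*a'))"
      by (rule agree[OF E E1_T2[OF ha ha' bb]])
         (use Gc[unfolded G_def] in \<open>simp add: at_lam_def r_def ha' algebra_simps power2_eq_square\<close>)
    then show ?thesis using knz ha ha' by blast
  qed
qed


theorem theorem4p8:
  fixes c a b a' b' :: complex
  assumes "a \<noteq> 0" and "a' \<noteq> 0" and "b \<noteq> b'" and "b - b' + c = 0"
  shows "(\<forall>f g h. is_module c a b a' b' f g h \<longrightarrow> h = 0)
       \<and> (\<forall>f g h. is_module c a b a' b' f g h \<longrightarrow>
            (\<exists>g' h'. is_module c a b a' b' 0 g' h' \<and> ext_equiv c a b a' b' (f, g, h) (0, g', h')))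
       \<and> (\<forall>g. is_module c a b a' b' 0 g 0 \<longrightarrow>
            ((\<not> ext_equiv c a b a' b' (0, g, 0) (0, 0, 0)) \<longleftrightarrow> g \<noteq> 0))
       \<and> (\<forall>g. g \<noteq> 0 \<longrightarrow>
            (is_module c a b a' b' 0 g 0 \<longleftrightarrow>
             (\<exists>k. k \<noteq> 0 \<and>
               ((a - a' = -1/2 \<and> g = Cst k)
              \<or> (a - a' = 1/2 \<and> g = Cst k * (Dv + Cst (2*a') * Lv + Cst (-2*a'*c + b')))
              \<or> (a = 1 \<and> a' = -1/2 \<and>
                  g = Cst k * (Dv^2 + Cst (2*(1 + 2*a')) * Dv * Lv + Cst (2*a') * Lv^2
                       + Cst (2*b' - 2*(1 + 2*a')*c) * Dv
                       + Cst (-4*c*a' + 2*(1 + 2*a')*b') * Lv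
                       + Cst (b'^2 - 2*c*b'*(1 + 2*a') + 2*c^2*a')))))))"
  proof -
  have c0: "c \<noteq> 0" using assms(3,4) by auto
  have P1: "\<forall>f g h. is_module c a b a' b' f g h \<longrightarrow> h = 0"
    using mod_h0 assms(3,4) by blast
  have P2: "\<forall>f g h. is_module c a b a' b' f g h \<longrightarrow>
            (\<exists>g' h'. is_module c a b a' b' 0 g' h' \<and> ext_equiv c a b a' b' (f, g, h) (0, g', h'))"
  proof (intro allI impI)
    fix f g h assume m: "is_module c a b a' b' f g h"
    then have h0: "h = 0" using P1 by blast
    have "is_module c a b a' b' 0 g h" unfolding h0 by (rule module_of_E1[OF mod_E1[OF m]])
    moreover have "ext_equiv c a b a' b' (f, g, h) (0, g, h)" by (rule equiv_f0[OF m assms(3)])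
    ultimately show "\<exists>g' h'. is_module c a b a' b' 0 g' h' \<and> ext_equiv c a b a' b' (f, g, h) (0, g', h')"
      by blast
  qed
  have P3: "\<forall>g. is_module c a b a' b' 0 g 0 \<longrightarrow>
            ((\<not> ext_equiv c a b a' b' (0, g, 0) (0, 0, 0)) \<longleftrightarrow> g \<noteq> 0)"
    using nontriv[OF assms(3)] by blast
  have P4: "\<forall>g. g \<noteq> 0 \<longrightarrow>
            (is_module c a b a' b' 0 g 0 \<longleftrightarrow>
             (\<exists>k. k \<noteq> 0 \<and>
               ((a - a' = -1/2 \<and> g = Cst k)
              \<or> (a - a' = 1/2 \<and> g = Cst k * (Dv + Cst (2*a') * Lv + Cst (-2*a'*c + b')))
              \<or> (a = 1 \<and> a' = -1/2 \<and>
                  g = Cst k * (Dv^2 + Cst (2*(1 + 2*a')) * Dv * Lv + Cst (2*a') * Lv^2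
                       + Cst (2*b' - 2*(1 + 2*a')*c) * Dv
                       + Cst (-4*c*a' + 2*(1 + 2*a')*b') * Lv
                       + Cst (b'^2 - 2*c*b'*(1 + 2*a') + 2*c^2*a'))))))"
  proof (intro allI impI iffI)
    fix g :: poly2
    assume gnz: "g \<noteq> 0" and m: "is_module c a b a' b' 0 g 0"
    show "\<exists>k. k \<noteq> 0 \<and>
               ((a - a' = -1/2 \<and> g = Cst k)
              \<or> (a - a' = 1/2 \<and> g = Cst k * (Dv + Cst (2*a') * Lv + Cst (-2*a'*c + b')))
              \<or> (a = 1 \<and> a' = -1/2 \<and>
                  g = Cst k * (Dv^2 + Cst (2*(1 + 2*a')) * Dv * Lv + Cst (2*a') * Lv^2
                       + Cst (2*b' - 2*(1 + 2*a')*c) * Dv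
                       + Cst (-4*c*a' + 2*(1 + 2*a')*b') * Lv
                       + Cst (b'^2 - 2*c*b'*(1 + 2*a') + 2*c^2*a'))))"
      by (rule classify[OF mod_E1[OF m] gnz assms(2) c0 assms(4)])
  next
    fix g :: poly2
    assume "\<exists>k. k \<noteq> 0 \<and>
               ((a - a' = -1/2 \<and> g = Cst k)
              \<or> (a - a' = 1/2 \<and> g = Cst k * (Dv + Cst (2*a') * Lv + Cst (-2*a'*c + b')))
              \<or> (a = 1 \<and> a' = -1/2 \<and>
                  g = Cst k * (Dv^2 + Cst (2*(1 + 2*a')) * Dv * Lv + Cst (2*a') * Lv^2
                       + Cst (2*b' - 2*(1 + 2*a')*c) * Dv
                       + Cst (-4*c*a' + 2*(1 + 2*a')*b') * Lv
                       + Cst (b'^2 - 2*c*b'*(1 + 2*a') + 2*c^2*a'))))"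
    then obtain k where disj: "(a - a' = -1/2 \<and> g = Cst k)
              \<or> (a - a' = 1/2 \<and> g = Cst k * (Dv + Cst (2*a') * Lv + Cst (-2*a'*c + b')))
              \<or> (a = 1 \<and> a' = -1/2 \<and>
                  g = Cst k * (Dv^2 + Cst (2*(1 + 2*a')) * Dv * Lv + Cst (2*a') * Lv^2
                       + Cst (2*b' - 2*(1 + 2*a')*c) * Dv
                       + Cst (-4*c*a' + 2*(1 + 2*a')*b') * Lv
                       + Cst (b'^2 - 2*c*b'*(1 + 2*a') + 2*c^2*a')))" by blast
    have "E1 c a b a' b' g"
      using disj E1_T0[OF _ assms(4), where k=k] E1_T1[OF _ assms(4), where k=k] E1_T2[OF _ _ assms(4), where k=k] by blast
    then show "is_module c a b a' b' 0 g 0" by (rule module_of_E1)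
  qed
  show ?thesis using P1 P2 P3 P4 by blast
qed

end
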